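(* Let $(\mathfrak g,\cdot)$ be a perm algebra, $\omega\in(\mathfrak g\otimes\mathfrak g)^*$ symmetric such that $(\mathfrak g,\cdot,\omega)$ is a symplectic perm algebra, and $r=\sum r^1\otimes r^2\in\mathfrak g\otimes\mathfrak g$ symmetric. Assume (i) $r$ satisfies the classical perm Yang–Baxter equation $r_{13}r_{12}-r_{13}r_{23}+r_{23}r_{12}-r_{12}r_{23}=0$ in $(\mathfrak g,\cdot)$ (so $(\mathfrak g,\cdot,r,\Delta_r)$ is a quasitriangular perm bialgebra), and (ii) $\omega$ satisfies the classical co-perm Yang–Baxter equation in the perm coalgebra $(\mathfrak g,\Delta_r)$ (so $(\mathfrak g,\Delta_r,\omega,\cdot_\omega)$ is a dual quasitriangular perm bialgebra). Then $N:\mathfrak g\to\mathfrak g$, $N(x)=\omega(x,r^1)r^2$, is a Nijenhuis operator on $(\mathfrak g,\cdot)$, i.e. $N(x)N(y)+N^2(xy)=N(N(x)y)+N(xN(y))$ for all $x,y$.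
   Context: Over a field $K$. A (right) perm algebra: bilinear product with $(xy)z=x(yz)=x(zy)$. $(\mathfrak g,\cdot,\omega)$ symplectic: $\omega$ symmetric and $\omega(xy,z)+\omega(xz,y)=\omega(zx,y)+\omega(zy,x)$ for all $x,y,z$. For $r$ with second copy $\bar r$: $\Delta_r(x)=xr^1\otimes r^2+r^1\otimes xr^2-r^1\otimes r^2x$ (Sweedler notation $\Delta_r(x)=x_{(1)}\otimes x_{(2)}$); $r_{13}r_{12}=r^1\bar r^1\otimes\bar r^2\otimes r^2$, $r_{13}r_{23}=r^1\otimes\bar r^1\otimes r^2\bar r^2$, $r_{23}r_{12}=\bar r^1\otimes r^1\bar r^2\otimes r^2$, $r_{12}r_{23}=r^1\otimes r^2\bar r^1\otimes\bar r^2$. Classical co-perm Yang–Baxter equation in $(\mathfrak g,\Delta)$: $\omega(x_{(1)},z)\omega(x_{(2)},y)-\omega(x,z_{(1)})\omega(y,z_{(2)})+\omega(y_{(1)},z)\omega(x,y_{(2)})-\omega(x,y_{(1)})\omega(y_{(2)},z)=0$ for all $x,y,z$; $\cdot_\omega$ is $x\cdot_\omega y=x_{(1)}\omega(x_{(2)},y)+y_{(1)}\omega(x,y_{(2)})-y_{(2)}\omega(x,y_{(1)})$. *)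

theory Defs
  imports Main "HOL-Library.Function_Algebras"
begin

text \<open>A finite-dimensional vector space over a field 'k is modelled as 'n \<Rightarrow> 'k
  with 'n a finite index type (coordinates w.r.t. the standard basis).
  Elements of g\<otimes>g resp. g\<otimes>g\<otimes>g are their coordinate arrays.\<close>

type_synonym ('k, 'n) vec = "'n \<Rightarrow> 'k"

definition bvec :: "'n \<Rightarrow> ('k::field, 'n) vec" where
  "bvec i = (\<lambda>j. if j = i then 1 else 0)"

definition smul :: "'k::field \<Rightarrow> ('k, 'n) vec \<Rightarrow> ('k, 'n) vec" where
  "smul c x = (\<lambda>j. c * x j)"

definition bilinear_prod :: "(('k::field, 'n) vec \<Rightarrow> ('k, 'n) vec \<Rightarrow> ('k, 'n) vec) \<Rightarrow> bool" where
  "bilinear_prod m \<longleftrightarrow>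
     (\<forall>x y z. m (x + y) z = m x z + m y z) \<and> (\<forall>x y z. m x (y + z) = m x y + m x z) \<and>
     (\<forall>c x y. m (smul c x) y = smul c (m x y)) \<and> (\<forall>c x y. m x (smul c y) = smul c (m x y))"

definition bilinear_form :: "(('k::field, 'n) vec \<Rightarrow> ('k, 'n) vec \<Rightarrow> 'k) \<Rightarrow> bool" where
  "bilinear_form w \<longleftrightarrow>
     (\<forall>x y z. w (x + y) z = w x z + w y z) \<and> (\<forall>x y z. w x (y + z) = w x y + w x z) \<and>
     (\<forall>c x y. w (smul c x) y = c * w x y) \<and> (\<forall>c x y. w x (smul c y) = c * w x y)"

definition perm_algebra :: "(('k::field, 'n) vec \<Rightarrow> ('k, 'n) vec \<Rightarrow> ('k, 'n) vec) \<Rightarrow> bool" where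
  "perm_algebra m \<longleftrightarrow> bilinear_prod m \<and>
     (\<forall>x y z. m (m x y) z = m x (m y z) \<and> m x (m y z) = m x (m z y))"

definition symplectic_perm :: "(('k::field, 'n) vec \<Rightarrow> ('k, 'n) vec \<Rightarrow> ('k, 'n) vec)
     \<Rightarrow> (('k, 'n) vec \<Rightarrow> ('k, 'n) vec \<Rightarrow> 'k) \<Rightarrow> bool" where
  "symplectic_perm m w \<longleftrightarrow> perm_algebra m \<and> bilinear_form w \<and> (\<forall>x y. w x y = w y x) \<and>
     (\<forall>x y z. w (m x y) z + w (m x z) y = w (m z x) y + w (m z y) x)"

definition sym_tensor :: "('n \<Rightarrow> 'n \<Rightarrow> 'k) \<Rightarrow> bool" where
  "sym_tensor r \<longleftrightarrow> (\<forall>i j. r i j = r j i)"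

definition simple2 :: "('k::field, 'n) vec \<Rightarrow> ('k, 'n) vec \<Rightarrow> 'n \<Rightarrow> 'n \<Rightarrow> 'k" where
  "simple2 a b = (\<lambda>p q. a p * b q)"

definition simple3 :: "('k::field, 'n) vec \<Rightarrow> ('k, 'n) vec \<Rightarrow> ('k, 'n) vec \<Rightarrow> 'n \<Rightarrow> 'n \<Rightarrow> 'n \<Rightarrow> 'k" where
  "simple3 a b c = (\<lambda>p q s. a p * b q * c s)"

text \<open>With r = \<Sum>_{i,j} r i j e_i \<otimes> e_j and second copy r-bar = \<Sum>_{k,l} r k l e_k \<otimes> e_l.\<close>
definition r13r12 where
  "r13r12 m r = (\<Sum>i\<in>UNIV. \<Sum>j\<in>UNIV. \<Sum>k\<in>UNIV. \<Sum>l\<in>UNIV. (\<lambda>p q s. r i j * r k l * simple3 (m (bvec i) (bvec k)) (bvec l) (bvec j) p q s))"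
definition r13r23 where
  "r13r23 m r = (\<Sum>i\<in>UNIV. \<Sum>j\<in>UNIV. \<Sum>k\<in>UNIV. \<Sum>l\<in>UNIV. (\<lambda>p q s. r i j * r k l * simple3 (bvec i) (bvec k) (m (bvec j) (bvec l)) p q s))"
definition r23r12 where
  "r23r12 m r = (\<Sum>i\<in>UNIV. \<Sum>j\<in>UNIV. \<Sum>k\<in>UNIV. \<Sum>l\<in>UNIV. (\<lambda>p q s. r i j * r k l * simple3 (bvec k) (m (bvec i) (bvec l)) (bvec j) p q s))"
definition r12r23 where
  "r12r23 m r = (\<Sum>i\<in>UNIV. \<Sum>j\<in>UNIV. \<Sum>k\<in>UNIV. \<Sum>l\<in>UNIV. (\<lambda>p q s. r i j * r k l * simple3 (bvec i) (m (bvec j) (bvec k)) (bvec l) p q s))"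

definition CPYBE :: "(('k::field, 'n::finite) vec \<Rightarrow> ('k, 'n) vec \<Rightarrow> ('k, 'n) vec) \<Rightarrow> ('n \<Rightarrow> 'n \<Rightarrow> 'k) \<Rightarrow> bool" where
  "CPYBE m r \<longleftrightarrow> r13r12 m r - r13r23 m r + r23r12 m r - r12r23 m r = 0"

definition Delta_r :: "(('k::field, 'n::finite) vec \<Rightarrow> ('k, 'n) vec \<Rightarrow> ('k, 'n) vec) \<Rightarrow> ('n \<Rightarrow> 'n \<Rightarrow> 'k)
     \<Rightarrow> ('k, 'n) vec \<Rightarrow> 'n \<Rightarrow> 'n \<Rightarrow> 'k" where
  "Delta_r m r x = (\<Sum>i\<in>UNIV. \<Sum>j\<in>UNIV. (\<lambda>p q. r i j *
      (simple2 (m x (bvec i)) (bvec j) p q + simple2 (bvec i) (m x (bvec j)) p q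
       - simple2 (bvec i) (m (bvec j) x) p q)))"

text \<open>Evaluating a bilinear expression f(x_(1), x_(2)) on a tensor T = \<Sum> x_(1) \<otimes> x_(2).\<close>
definition tpair :: "('n::finite \<Rightarrow> 'n \<Rightarrow> 'k::field) \<Rightarrow> (('k, 'n) vec \<Rightarrow> ('k, 'n) vec \<Rightarrow> 'k) \<Rightarrow> 'k" where
  "tpair T f = (\<Sum>p\<in>UNIV. \<Sum>q\<in>UNIV. T p q * f (bvec p) (bvec q))"

definition coPYBE :: "(('k::field, 'n::finite) vec \<Rightarrow> 'n \<Rightarrow> 'n \<Rightarrow> 'k) \<Rightarrow> (('k, 'n) vec \<Rightarrow> ('k, 'n) vec \<Rightarrow> 'k) \<Rightarrow> bool" where
  "coPYBE \<Delta> w \<longleftrightarrow> (\<forall>x y z.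
      tpair (\<Delta> x) (\<lambda>a b. w a z * w b y) - tpair (\<Delta> z) (\<lambda>a b. w x a * w y b)
    + tpair (\<Delta> y) (\<lambda>a b. w a z * w x b) - tpair (\<Delta> y) (\<lambda>a b. w x a * w b z) = 0)"

definition Nop :: "(('k::field, 'n::finite) vec \<Rightarrow> ('k, 'n) vec \<Rightarrow> 'k) \<Rightarrow> ('n \<Rightarrow> 'n \<Rightarrow> 'k) \<Rightarrow> ('k, 'n) vec \<Rightarrow> ('k, 'n) vec" where
  "Nop w r x = (\<Sum>i\<in>UNIV. \<Sum>j\<in>UNIV. smul (r i j * w x (bvec i)) (bvec j))"

definition nijenhuis :: "(('k::field, 'n) vec \<Rightarrow> ('k, 'n) vec \<Rightarrow> ('k, 'n) vec) \<Rightarrow> (('k, 'n) vec \<Rightarrow> ('k, 'n) vec) \<Rightarrow> bool" where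
  "nijenhuis m N \<longleftrightarrow> (\<forall>x y. m (N x) (N y) + N (N (m x y)) = N (m (N x) y) + N (m x (N y)))"

end

theory Submission
  imports Defs
begin

lemma sum_app: "(sum f A) x = sum (\<lambda>i. f i x) A"
  by (induction A rule: infinite_finite_induct) auto

definition lin :: "(('k::field,'n) vec \<Rightarrow> 'k) \<Rightarrow> bool" where
 "lin f \<longleftrightarrow> (\<forall>x y. f (x+y) = f x + f y) \<and> (\<forall>c x. f (smul c x) = c * f x)"

definition linm :: "(('k::field,'n) vec \<Rightarrow> ('k,'n) vec) \<Rightarrow> bool" where
 "linm f \<longleftrightarrow> (\<forall>x y. f (x+y) = f x + f y) \<and> (\<forall>c x. f (smul c x) = smul c (f x))"

lemma delta1: "(\<Sum>j\<in>(UNIV::'n::finite set). f j * (if s = j then 1 else (0::'k::field))) = f s"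
proof -
  have "(\<Sum>j\<in>(UNIV::'n set). f j * (if s = j then 1 else (0::'k))) = (\<Sum>j\<in>UNIV. if s = j then f j else 0)"
    by (rule sum.cong) auto
  then show ?thesis by simp
qed

lemma vec_expand: "(x::('k::field,'n::finite) vec) = (\<Sum>i\<in>UNIV. smul (x i) (bvec i))"
  by (rule ext) (simp add: sum_app smul_def bvec_def delta1)

lemma lin_zero: "lin (f::('k::field,'n) vec \<Rightarrow> 'k) \<Longrightarrow> f 0 = 0"
proof -
  assume "lin f"
  have "smul 0 (0::('k,'n) vec) = 0" by (simp add: smul_def fun_eq_iff)
  then show ?thesis using \<open>lin f\<close> unfolding lin_def by (metis mult_zero_left)
qed

lemma lin_sum: "lin f \<Longrightarrow> f (sum g A) = sum (\<lambda>i. f (g i)) A"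
  by (induction A rule: infinite_finite_induct) (auto simp: lin_zero lin_def)

lemma lin_expand: "lin f \<Longrightarrow> f (x::('k::field,'n::finite) vec) = (\<Sum>i\<in>UNIV. x i * f (bvec i))"
proof -
  assume l: "lin f"
  have "f x = f (\<Sum>i\<in>UNIV. smul (x i) (bvec i))" using vec_expand[of x] by simp
  also have "\<dots> = (\<Sum>i\<in>UNIV. x i * f (bvec i))" using l by (simp add: lin_sum) (simp add: lin_def)
  finally show ?thesis .
qed

lemma lin_comp: "lin f \<Longrightarrow> linm g \<Longrightarrow> lin (\<lambda>u. f (g u))"
  by (simp add: lin_def linm_def)

lemma lin_coord: "lin (\<lambda>u. u s)"
  by (simp add: lin_def smul_def)

lemma bf_lin1: "bilinear_form w \<Longrightarrow> lin (\<lambda>u. w u y)"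
  by (simp add: lin_def bilinear_form_def)
lemma bf_lin2: "bilinear_form w \<Longrightarrow> lin (\<lambda>u. w y u)"
  by (simp add: lin_def bilinear_form_def)
lemma bp_lin1: "bilinear_prod m \<Longrightarrow> linm (\<lambda>u. m u y)"
  by (simp add: linm_def bilinear_prod_def)
lemma bp_lin2: "bilinear_prod m \<Longrightarrow> linm (\<lambda>u. m y u)"
  by (simp add: linm_def bilinear_prod_def)

lemma Nop_app: "Nop w r x s = (\<Sum>i\<in>UNIV. r i s * w x (bvec i))"
  by (simp add: Nop_def sum_app smul_def bvec_def mult.assoc[symmetric] delta1)

lemma contract1:
  assumes "lin l"
  shows "(\<Sum>i\<in>UNIV. \<Sum>j\<in>UNIV. r i j * w y (bvec i) * l (bvec j)) = l (Nop w r y)"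
proof -
  have "l (Nop w r y) = (\<Sum>j\<in>UNIV. (\<Sum>i\<in>UNIV. r i j * w y (bvec i)) * l (bvec j))"
    by (simp only: lin_expand[OF assms, of "Nop w r y"] Nop_app)
  also have "\<dots> = (\<Sum>j\<in>UNIV. \<Sum>i\<in>UNIV. r i j * w y (bvec i) * l (bvec j))"
    by (simp add: sum_distrib_right)
  also have "\<dots> = (\<Sum>i\<in>UNIV. \<Sum>j\<in>UNIV. r i j * w y (bvec i) * l (bvec j))"
    by (rule sum.swap)
  finally show ?thesis by (rule sym)
qed

lemma contract2:
  assumes "lin l" "sym_tensor r"
  shows "(\<Sum>i\<in>UNIV. \<Sum>j\<in>UNIV. r i j * l (bvec i) * w y (bvec j)) = l (Nop w r y)"
proof -
  have "(\<Sum>i\<in>UNIV. \<Sum>j\<in>UNIV. r i j * l (bvec i) * w y (bvec j))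
      = (\<Sum>j\<in>UNIV. \<Sum>i\<in>UNIV. r j i * w y (bvec j) * l (bvec i))"
    using assms(2) unfolding sym_tensor_def by (subst sum.swap) (simp add: mult_ac)
  also have "\<dots> = l (Nop w r y)" by (rule contract1[OF assms(1)])
  finally show ?thesis .
qed

definition ctr :: "('n \<Rightarrow> 'k) \<Rightarrow> ('n \<Rightarrow> 'k) \<Rightarrow> 'n \<Rightarrow> ('n::finite \<Rightarrow> 'n \<Rightarrow> 'n \<Rightarrow> 'k::field) \<Rightarrow> 'k" where
  "ctr a b s T = (\<Sum>p\<in>UNIV. \<Sum>q\<in>UNIV. a p * b q * T p q s)"

lemma ctr_add: "ctr a b s (T1 + T2) = ctr a b s T1 + ctr a b s T2"
  by (simp add: ctr_def ring_distribs sum.distrib)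
lemma ctr_diff: "ctr a b s (T1 - T2) = ctr a b s T1 - ctr a b s T2"
  by (simp add: ctr_def ring_distribs sum_subtractf)
lemma ctr_zero: "ctr a b s 0 = 0"
  by (simp add: ctr_def)
lemma ctr_sum: "ctr a b s (sum F A) = (\<Sum>i\<in>A. ctr a b s (F i))"
proof (induction A rule: infinite_finite_induct)
  case (infinite A)
  then show ?case by (metis sum.infinite ctr_zero)
next
  case empty
  then show ?case by (simp only: sum.empty ctr_zero)
next
  case (insert x A)
  then show ?case by (metis (no_types, lifting) sum.insert ctr_add)
qed

lemma ctr_simple:
  assumes "lin f" "lin g"
  shows "ctr (\<lambda>p. f (bvec p)) (\<lambda>q. g (bvec q)) s (\<lambda>p q s. c * simple3 A B C p q s) = c * f A * g B * C s"
proof -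
  have "ctr (\<lambda>p. f (bvec p)) (\<lambda>q. g (bvec q)) s (\<lambda>p q s. c * simple3 A B C p q s)
     = c * C s * ((\<Sum>p\<in>UNIV. A p * f (bvec p)) * (\<Sum>q\<in>UNIV. B q * g (bvec q)))"
    by (simp add: ctr_def simple3_def sum_product sum_distrib_left mult_ac) (rule sum.swap)
  also have "\<dots> = c * f A * g B * C s" using lin_expand[OF assms(1), of A] lin_expand[OF assms(2), of B]
    by simp
  finally show ?thesis .
qed

lemma tpair_sum: "tpair (sum F A) G = (\<Sum>i\<in>A. tpair (F i) G)"
  by (induction A rule: infinite_finite_induct) (auto simp: tpair_def ring_distribs sum.distrib)

lemma tpair_lin3: "tpair (\<lambda>p q. c * (X p q + Y p q - Z p q)) G = c * (tpair X G + tpair Y G - tpair Z G)"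
  by (simp add: tpair_def ring_distribs sum.distrib sum_subtractf sum_distrib_left mult_ac)

lemma tpair_simple2:
  assumes "lin f" "lin g"
  shows "tpair (simple2 A B) (\<lambda>a b. f a * g b) = f A * g B"
proof -
  have "tpair (simple2 A B) (\<lambda>a b. f a * g b) = (\<Sum>p\<in>UNIV. A p * f (bvec p)) * (\<Sum>q\<in>UNIV. B q * g (bvec q))"
    by (simp add: tpair_def simple2_def sum_product mult_ac)
  then show ?thesis using lin_expand[OF assms(1), of A] lin_expand[OF assms(2), of B] by simp
qed

lemma tpair_Delta:
  assumes "lin f" "lin g"
  shows "tpair (Delta_r m r x) (\<lambda>a b. f a * g b) = (\<Sum>i\<in>UNIV. \<Sum>j\<in>UNIV. r i j *
     (f (m x (bvec i)) * g (bvec j) + f (bvec i) * g (m x (bvec j)) - f (bvec i) * g (m (bvec j) x)))"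
  unfolding Delta_r_def by (simp only: tpair_sum tpair_lin3 tpair_simple2[OF assms])

lemma bvec_sum: "(\<Sum>j\<in>(UNIV::'n::finite set). bvec j s * f j) = (f s::'k::field)"
  using delta1[of f s] by (simp add: bvec_def mult.commute)

lemma swap3: "(\<Sum>j\<in>A. \<Sum>k\<in>B. \<Sum>l\<in>C. F j k l) = (\<Sum>k\<in>B. \<Sum>l\<in>C. \<Sum>j\<in>A. F j k l)"
proof -
  have "(\<Sum>j\<in>A. \<Sum>k\<in>B. \<Sum>l\<in>C. F j k l) = (\<Sum>k\<in>B. \<Sum>j\<in>A. \<Sum>l\<in>C. F j k l)" by (rule sum.swap)
  also have "\<dots> = (\<Sum>k\<in>B. \<Sum>l\<in>C. \<Sum>j\<in>A. F j k l)" by (rule sum.cong[OF refl], rule sum.swap)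
  finally show ?thesis .
qed

lemma swap4: "(\<Sum>i\<in>A. \<Sum>j\<in>B. \<Sum>k\<in>C. \<Sum>l\<in>D. F i j k l) = (\<Sum>k\<in>C. \<Sum>l\<in>D. \<Sum>i\<in>A. \<Sum>j\<in>B. F i j k l)"
proof -
  have "(\<Sum>i\<in>A. \<Sum>j\<in>B. \<Sum>k\<in>C. \<Sum>l\<in>D. F i j k l) = (\<Sum>i\<in>A. \<Sum>k\<in>C. \<Sum>l\<in>D. \<Sum>j\<in>B. F i j k l)"
    by (rule sum.cong[OF refl], rule swap3)
  also have "\<dots> = (\<Sum>k\<in>C. \<Sum>l\<in>D. \<Sum>i\<in>A. \<Sum>j\<in>B. F i j k l)" by (rule swap3)
  finally show ?thesis .
qed

lemma selfadj:
  assumes bf: "bilinear_form w" and ws: "\<And>a b. w a b = w b a" and sr: "sym_tensor r"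
  shows "w (Nop w r z) v = w z (Nop w r v)"
proof -
  have "w (Nop w r z) v = (\<Sum>i\<in>UNIV. \<Sum>j\<in>UNIV. r i j * w z (bvec i) * w (bvec j) v)"
    using contract1[OF bf_lin1[OF bf], of r w z v] by simp
  also have "\<dots> = (\<Sum>i\<in>UNIV. \<Sum>j\<in>UNIV. r i j * w z (bvec i) * w v (bvec j))"
    using ws by simp
  also have "\<dots> = w z (Nop w r v)"
    using contract2[OF bf_lin2[OF bf] sr, of z w v] by simp
  finally show ?thesis .
qed

lemma TD:
  assumes bp: "bilinear_prod m" and bf: "bilinear_form w" and ws: "\<And>a b. w a b = w b a" and sr: "sym_tensor r"
  shows "tpair (Delta_r m r u) (\<lambda>a b. w a p * w b q)
     = w (m u (Nop w r q)) p + w (m u (Nop w r p)) q - w (m (Nop w r p) u) q"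
proof -
  have l1: "\<And>a z. lin (\<lambda>v. w (m a v) z)" by (rule lin_comp[OF bf_lin1[OF bf] bp_lin2[OF bp]])
  have l2: "\<And>a z. lin (\<lambda>v. w (m v a) z)" by (rule lin_comp[OF bf_lin1[OF bf] bp_lin1[OF bp]])
  have "tpair (Delta_r m r u) (\<lambda>a b. w a p * w b q) = (\<Sum>i\<in>UNIV. \<Sum>j\<in>UNIV. r i j *
     (w (m u (bvec i)) p * w (bvec j) q + w (bvec i) p * w (m u (bvec j)) q - w (bvec i) p * w (m (bvec j) u) q))"
    by (rule tpair_Delta[OF bf_lin1[OF bf] bf_lin1[OF bf]])
  also have "\<dots> = (\<Sum>i\<in>UNIV. \<Sum>j\<in>UNIV. r i j * w (m u (bvec i)) p * w q (bvec j))
     + (\<Sum>i\<in>UNIV. \<Sum>j\<in>UNIV. r i j * w p (bvec i) * w (m u (bvec j)) q)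
     - (\<Sum>i\<in>UNIV. \<Sum>j\<in>UNIV. r i j * w p (bvec i) * w (m (bvec j) u) q)"
    by (simp add: ring_distribs sum.distrib sum_subtractf mult_ac ws[of "bvec _" p] ws[of "bvec _" q])
  also have "\<dots> = w (m u (Nop w r q)) p + w (m u (Nop w r p)) q - w (m (Nop w r p) u) q"
    using contract2[OF l1 sr, of u p w q] contract1[OF l1, of r w p u q] contract1[OF l2, of r w p u q]
    by simp
  finally show ?thesis .
qed

lemma cpybe_coord:
  assumes bp: "bilinear_prod m" and bf: "bilinear_form w" and sr: "sym_tensor r" and cp: "CPYBE m r"
  shows "m (Nop w r x) (Nop w r y) s = (\<Sum>i\<in>UNIV. r i s * (w x (m (bvec i) (Nop w r y))
     + w y (m (bvec i) (Nop w r x)) - w y (m (Nop w r x) (bvec i))))"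
proof -
  let ?N = "Nop w r"
  let ?a = "\<lambda>p. w x (bvec p)" and ?b = "\<lambda>q. w y (bvec q)"
  note lx = bf_lin2[OF bf, of x] and ly = bf_lin2[OF bf, of y]
  have lA: "\<And>a z. lin (\<lambda>v. w z (m a v))" by (rule lin_comp[OF bf_lin2[OF bf] bp_lin2[OF bp]])
  have lB: "\<And>a z. lin (\<lambda>v. w z (m v a))" by (rule lin_comp[OF bf_lin2[OF bf] bp_lin1[OF bp]])
  have lC: "\<And>a. lin (\<lambda>v. m a v s)" by (rule lin_comp[OF lin_coord bp_lin2[OF bp]])
  have lD: "\<And>a. lin (\<lambda>v. m v a s)" by (rule lin_comp[OF lin_coord bp_lin1[OF bp]])
  have "ctr ?a ?b s (r13r12 m r - r13r23 m r + r23r12 m r - r12r23 m r) = 0"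
    using cp unfolding CPYBE_def by (simp only: ctr_zero)
  then have E: "ctr ?a ?b s (r13r12 m r) - ctr ?a ?b s (r13r23 m r) + ctr ?a ?b s (r23r12 m r) - ctr ?a ?b s (r12r23 m r) = 0"
    by (simp only: ctr_add ctr_diff)
  have "ctr ?a ?b s (r13r12 m r) = (\<Sum>i\<in>UNIV. \<Sum>j\<in>UNIV. \<Sum>k\<in>UNIV. \<Sum>l\<in>UNIV.
      r i j * r k l * w x (m (bvec i) (bvec k)) * w y (bvec l) * bvec j s)"
    unfolding r13r12_def by (simp only: ctr_sum ctr_simple[OF lx ly])
  also have "\<dots> = (\<Sum>i\<in>UNIV. \<Sum>j\<in>UNIV. bvec j s * (r i j * (\<Sum>k\<in>UNIV. \<Sum>l\<in>UNIV.
      r k l * w x (m (bvec i) (bvec k)) * w y (bvec l))))"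
    by (simp add: sum_distrib_left mult_ac)
  also have "\<dots> = (\<Sum>i\<in>UNIV. \<Sum>j\<in>UNIV. bvec j s * (r i j * w x (m (bvec i) (?N y))))"
    by (simp only: contract2[OF lA sr])
  also have "\<dots> = (\<Sum>i\<in>UNIV. r i s * w x (m (bvec i) (?N y)))"
    by (simp only: bvec_sum)
  finally have C1: "ctr ?a ?b s (r13r12 m r) = (\<Sum>i\<in>UNIV. r i s * w x (m (bvec i) (?N y)))" .
  have "ctr ?a ?b s (r13r23 m r) = (\<Sum>i\<in>UNIV. \<Sum>j\<in>UNIV. \<Sum>k\<in>UNIV. \<Sum>l\<in>UNIV.
      r i j * r k l * w x (bvec i) * w y (bvec k) * m (bvec j) (bvec l) s)"
    unfolding r13r23_def by (simp only: ctr_sum ctr_simple[OF lx ly])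
  also have "\<dots> = (\<Sum>i\<in>UNIV. \<Sum>j\<in>UNIV. r i j * w x (bvec i) * (\<Sum>k\<in>UNIV. \<Sum>l\<in>UNIV.
      r k l * w y (bvec k) * m (bvec j) (bvec l) s))"
    by (simp add: sum_distrib_left mult_ac)
  also have "\<dots> = (\<Sum>i\<in>UNIV. \<Sum>j\<in>UNIV. r i j * w x (bvec i) * m (bvec j) (?N y) s)"
    by (simp only: contract1[OF lC])
  also have "\<dots> = m (?N x) (?N y) s"
    by (simp only: contract1[OF lD])
  finally have C2: "ctr ?a ?b s (r13r23 m r) = m (?N x) (?N y) s" .
  have "ctr ?a ?b s (r23r12 m r) = (\<Sum>i\<in>UNIV. \<Sum>j\<in>UNIV. \<Sum>k\<in>UNIV. \<Sum>l\<in>UNIV.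
      r i j * r k l * w x (bvec k) * w y (m (bvec i) (bvec l)) * bvec j s)"
    unfolding r23r12_def by (simp only: ctr_sum ctr_simple[OF lx ly])
  also have "\<dots> = (\<Sum>i\<in>UNIV. \<Sum>j\<in>UNIV. bvec j s * (r i j * (\<Sum>k\<in>UNIV. \<Sum>l\<in>UNIV.
      r k l * w x (bvec k) * w y (m (bvec i) (bvec l)))))"
    by (simp add: sum_distrib_left mult_ac)
  also have "\<dots> = (\<Sum>i\<in>UNIV. \<Sum>j\<in>UNIV. bvec j s * (r i j * w y (m (bvec i) (?N x))))"
    by (simp only: contract1[OF lA])
  also have "\<dots> = (\<Sum>i\<in>UNIV. r i s * w y (m (bvec i) (?N x)))"
    by (simp only: bvec_sum)
  finally have C3: "ctr ?a ?b s (r23r12 m r) = (\<Sum>i\<in>UNIV. r i s * w y (m (bvec i) (?N x)))" .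
  have "ctr ?a ?b s (r12r23 m r) = (\<Sum>i\<in>UNIV. \<Sum>j\<in>UNIV. \<Sum>k\<in>UNIV. \<Sum>l\<in>UNIV.
      r i j * r k l * w x (bvec i) * w y (m (bvec j) (bvec k)) * bvec l s)"
    unfolding r12r23_def by (simp only: ctr_sum ctr_simple[OF lx ly])
  also have "\<dots> = (\<Sum>k\<in>UNIV. \<Sum>l\<in>UNIV. \<Sum>i\<in>UNIV. \<Sum>j\<in>UNIV.
      r i j * r k l * w x (bvec i) * w y (m (bvec j) (bvec k)) * bvec l s)"
    by (rule swap4)
  also have "\<dots> = (\<Sum>k\<in>UNIV. \<Sum>l\<in>UNIV. bvec l s * (r k l * (\<Sum>i\<in>UNIV. \<Sum>j\<in>UNIV.
      r i j * w x (bvec i) * w y (m (bvec j) (bvec k)))))"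
    by (simp add: sum_distrib_left mult_ac)
  also have "\<dots> = (\<Sum>k\<in>UNIV. \<Sum>l\<in>UNIV. bvec l s * (r k l * w y (m (?N x) (bvec k))))"
    by (simp only: contract1[OF lB])
  also have "\<dots> = (\<Sum>k\<in>UNIV. r k s * w y (m (?N x) (bvec k)))"
    by (simp only: bvec_sum)
  finally have C4: "ctr ?a ?b s (r12r23 m r) = (\<Sum>i\<in>UNIV. r i s * w y (m (?N x) (bvec i)))" .
  from E have "m (?N x) (?N y) s = (\<Sum>i\<in>UNIV. r i s * w x (m (bvec i) (?N y)))
     + (\<Sum>i\<in>UNIV. r i s * w y (m (bvec i) (?N x))) - (\<Sum>i\<in>UNIV. r i s * w y (m (?N x) (bvec i)))"
    unfolding C1 C2 C3 C4 by (simp add: algebra_simps)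
  then show ?thesis by (simp add: ring_distribs sum.distrib sum_subtractf)
qed

theorem theorem3p9:
  fixes m :: "('k::field, 'n::finite) vec \<Rightarrow> ('k, 'n) vec \<Rightarrow> ('k, 'n) vec"
    and w :: "('k, 'n) vec \<Rightarrow> ('k, 'n) vec \<Rightarrow> 'k"
    and r :: "'n \<Rightarrow> 'n \<Rightarrow> 'k"
  assumes "symplectic_perm m w"
    and "sym_tensor r"
    and "CPYBE m r"
    and "coPYBE (Delta_r m r) w"
  shows "nijenhuis m (Nop w r)"
proof -
  let ?N = "Nop w r"
  have bp: "bilinear_prod m" and bf: "bilinear_form w" and ws: "\<And>a b. w a b = w b a"
    and S: "\<And>x y z. w (m x y) z + w (m x z) y = w (m z x) y + w (m z y) x"
    using assms(1) unfolding symplectic_perm_def perm_algebra_def by auto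
  note sr = assms(2)
  have br: "w x (m u (?N y)) + w y (m u (?N x)) - w y (m (?N x) u) + w (?N (m x y)) u
      = w (m (?N x) y) u + w (m x (?N y)) u" for x y u
  proof -
    have cp: "tpair (Delta_r m r x) (\<lambda>a b. w a u * w b y) - tpair (Delta_r m r u) (\<lambda>a b. w x a * w y b)
      + tpair (Delta_r m r y) (\<lambda>a b. w a u * w x b) - tpair (Delta_r m r y) (\<lambda>a b. w x a * w b u) = 0"
      using assms(4) unfolding coPYBE_def by blast
    have f1: "(\<lambda>a b. w x a * w y b) = (\<lambda>a b. w a x * w b y)" using ws by simp
    have f2: "(\<lambda>a b. w a u * w x b) = (\<lambda>a b. w a u * w b x)" using ws by simp
    have f3: "(\<lambda>a b. w x a * w b u) = (\<lambda>a b. w a x * w b u)" using ws by simp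
    note T = TD[OF bp bf ws sr]
    have E: "(w (m x (?N y)) u + w (m x (?N u)) y - w (m (?N u) x) y)
      - (w (m u (?N y)) x + w (m u (?N x)) y - w (m (?N x) u) y)
      + (w (m y (?N x)) u + w (m y (?N u)) x - w (m (?N u) y) x)
      - (w (m y (?N u)) x + w (m y (?N x)) u - w (m (?N x) y) u) = 0"
      using cp unfolding f1 f2 f3 T .
    have S1: "w (m x y) (?N u) + w (m x (?N u)) y = w (m (?N u) x) y + w (m (?N u) y) x"
      by (rule S)
    have sa: "w (?N (m x y)) u = w (m x y) (?N u)" by (rule selfadj[OF bf ws sr])
    have g1: "w x (m u (?N y)) = w (m u (?N y)) x" by (rule ws)
    have g2: "w y (m u (?N x)) = w (m u (?N x)) y" by (rule ws)
    have g3: "w y (m (?N x) u) = w (m (?N x) u) y" by (rule ws)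
    show ?thesis unfolding g1 g2 g3 sa using E S1 by algebra
  qed
  show ?thesis unfolding nijenhuis_def
  proof (intro allI ext)
    fix x y s
    have "m (?N x) (?N y) s + ?N (?N (m x y)) s
       = (\<Sum>i\<in>UNIV. r i s * (w x (m (bvec i) (?N y)) + w y (m (bvec i) (?N x))
           - w y (m (?N x) (bvec i)) + w (?N (m x y)) (bvec i)))"
      unfolding cpybe_coord[OF bp bf sr assms(3)] Nop_app[of w r "?N (m x y)"]
      by (simp add: ring_distribs sum.distrib)
    also have "\<dots> = (\<Sum>i\<in>UNIV. r i s * (w (m (?N x) y) (bvec i) + w (m x (?N y)) (bvec i)))"
      by (simp only: br)
    also have "\<dots> = ?N (m (?N x) y) s + ?N (m x (?N y)) s"
      by (simp add: Nop_app ring_distribs sum.distrib)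
    finally show "(m (?N x) (?N y) + ?N (?N (m x y))) s = (?N (m (?N x) y) + ?N (m x (?N y))) s"
      by simp
  qed
qed

end
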